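(* Let $\Phi$ be a homogeneous Poisson point process of intensity $1$ in $\mathbb{R}^2$ with an additional point added at the origin $o$, and let $\Psi$ be an independent homogeneous Poisson point process of intensity $\lambda>0$ in $\mathbb{R}^2$. Let $\vec G_{\lambda,\infty}$ be the directed graph on $\Phi$ containing the directed edge $\overrightarrow{xy}$ ($x\ne y$) iff the closed disk of radius $\|x-y\|$ centered at $x$ contains no point of $\Psi$. Then the out-degree $N^{\mathrm{out}}$ of $o$ in $\vec G_{\lambda,\infty}$ is geometrically distributed with mean $1/\lambda$; precisely, $$\mathbb{P}[N^{\mathrm{out}}=n]=\frac{\lambda}{1+\lambda}\left(\frac{1}{1+\lambda}\right)^n,\qquad n=0,1,2,\dots$$ *)

theory Defs
  imports "HOL-Probability.Probability"
begin

definition pcount :: "(real^2) set \<Rightarrow> (real^2) set \<Rightarrow> nat" where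
  "pcount P A = card (P \<inter> A)"

text \<open>Two independent homogeneous Poisson point processes in the plane, given as random
  locally finite point sets on a probability space M, with intensities a and b:
  counts in bounded Borel sets are Poisson distributed with mean intensity times area,
  and the counts of both processes on disjoint bounded Borel sets are jointly independent
  (which also expresses the independence of the two processes).\<close>
definition indep_poisson_pps ::
  "'w measure \<Rightarrow> ('w \<Rightarrow> (real^2) set) \<Rightarrow> real \<Rightarrow> ('w \<Rightarrow> (real^2) set) \<Rightarrow> real \<Rightarrow> bool" where
  "indep_poisson_pps M Phi a Psi b \<longleftrightarrow>
     prob_space M \<and>
     (\<forall>\<omega>\<in>space M. \<forall>A. bounded A \<longrightarrow> finite (Phi \<omega> \<inter> A) \<and> finite (Psi \<omega> \<inter> A)) \<and>
     (\<forall>A\<in>sets lborel. bounded A \<longrightarrow>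
        (\<lambda>\<omega>. pcount (Phi \<omega>) A) \<in> measurable M (count_space UNIV) \<and>
        (\<lambda>\<omega>. pcount (Psi \<omega>) A) \<in> measurable M (count_space UNIV) \<and>
        (\<forall>k. measure M {\<omega>\<in>space M. pcount (Phi \<omega>) A = k}
               = (a * measure lborel A) ^ k / fact k * exp (- (a * measure lborel A))) \<and>
        (\<forall>k. measure M {\<omega>\<in>space M. pcount (Psi \<omega>) A = k}
               = (b * measure lborel A) ^ k / fact k * exp (- (b * measure lborel A)))) \<and>
     (\<forall>(I::nat set) (A::nat \<Rightarrow> (real^2) set) (B::nat \<Rightarrow> (real^2) set).
        finite I \<longrightarrow>
        (\<forall>i\<in>I. A i \<in> sets lborel \<and> bounded (A i) \<and> B i \<in> sets lborel \<and> bounded (B i)) \<longrightarrow>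
        disjoint_family_on A I \<longrightarrow> disjoint_family_on B I \<longrightarrow>
        prob_space.indep_vars M (\<lambda>_. count_space UNIV)
          (\<lambda>j \<omega>. case j of Inl i \<Rightarrow> pcount (Phi \<omega>) (A i) | Inr i \<Rightarrow> pcount (Psi \<omega>) (B i))
          (Inl ` I \<union> Inr ` I))"

definition out_edge :: "(real^2) set \<Rightarrow> real^2 \<Rightarrow> real^2 \<Rightarrow> bool" where
  "out_edge Psi x y \<longleftrightarrow> x \<noteq> y \<and> Psi \<inter> cball x (dist x y) = {}"

definition out_degree_origin :: "(real^2) set \<Rightarrow> (real^2) set \<Rightarrow> nat" where
  "out_degree_origin Phi Psi = card {y \<in> insert 0 Phi. out_edge Psi 0 y}"

end

theory Submission
  imports Defs
begin


definition PP :: "nat \<Rightarrow> real \<Rightarrow> real" where "PP n t = (\<Sum>m<n. t^m / fact m)"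
definition DD :: "nat \<Rightarrow> real \<Rightarrow> real" where "DD n t = exp (-t) * PP n t"

lemma deriv_DD: "(DD (Suc n) has_real_derivative (- exp (-t) * t^n / fact n)) (at t)"
proof (induction n)
  case 0
  then show ?case unfolding DD_def PP_def by (auto intro!: derivative_eq_intros)
next
  case (Suc n)
  have eq: "DD (Suc (Suc n)) = (\<lambda>t. DD (Suc n) t + exp (-t) * (t^(Suc n) / fact (Suc n)))"
    by (auto simp: DD_def PP_def algebra_simps fun_eq_iff)
  have "((\<lambda>t. DD (Suc n) t + exp (-t) * (t^(Suc n) / fact (Suc n))) has_real_derivative
     (- exp (-t) * t^n / fact n) + ((- exp (-t)) * (t^(Suc n) / fact (Suc n)) + exp (-t) * (real (Suc n) * t^n / fact (Suc n)))) (at t)"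
    by (intro DERIV_add[OF Suc.IH] derivative_eq_intros) auto
  moreover have "(- exp (-t) * t^n / fact n) + ((- exp (-t)) * (t^(Suc n) / fact (Suc n)) + exp (-t) * (real (Suc n) * t^n / fact (Suc n)))
     = - exp (-t) * t^(Suc n) / fact (Suc n)"
  proof -
    have "real (Suc n) * t^n / fact (Suc n) = t^n / fact n"
      by (simp add: fact_Suc divide_simps del: of_nat_Suc)
    then show ?thesis by (simp add: algebra_simps)
  qed
  ultimately show ?case using eq by simp
qed

lemma PP_le_exp: "0 \<le> t \<Longrightarrow> PP n t \<le> exp t"
  unfolding PP_def using summable_exp_generic[of t]
  by (auto simp: exp_def divide_inverse ac_simps intro!: sum_le_suminf)

lemma PP_nonneg: "0 \<le> t \<Longrightarrow> 0 \<le> PP n t"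
  unfolding PP_def by (auto intro!: sum_nonneg)

lemma DD_nonneg: "0 \<le> t \<Longrightarrow> 0 \<le> DD n t"
  unfolding DD_def using PP_nonneg by auto

lemma DD_le_1: "0 \<le> t \<Longrightarrow> DD n t \<le> 1"
  unfolding DD_def using PP_le_exp[of t n] by (simp add: exp_minus field_simps)

lemma DD_Suc_0: "DD (Suc n) 0 = 1"
  by (induction n) (auto simp: DD_def PP_def)

lemma pow_fact_le_exp: "0 \<le> (t::real) \<Longrightarrow> t^n / fact n \<le> exp t"
proof -
  assume t: "0 \<le> t"
  have "t^n / fact n \<le> PP (Suc n) t" unfolding PP_def using t
    by (simp add: sum_nonneg)
  then show ?thesis using PP_le_exp[OF t, of "Suc n"] by linarith
qed

lemma DD_mono: "0 \<le> x \<Longrightarrow> x \<le> y \<Longrightarrow> DD (Suc n) y \<le> DD (Suc n) x"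
  by (rule DERIV_nonpos_imp_nonincreasing[where f="DD (Suc n)"], simp)
     (use deriv_DD in \<open>auto intro!: exI divide_nonneg_nonneg\<close>)

lemma DD_lip: "0 \<le> x \<Longrightarrow> x \<le> y \<Longrightarrow> DD (Suc n) x - DD (Suc n) y \<le> y - x"
proof -
  assume xy: "0 \<le> x" "x \<le> y"
  have "(\<lambda>t. DD (Suc n) t + t) x \<le> (\<lambda>t. DD (Suc n) t + t) y"
  proof (rule DERIV_nonneg_imp_nondecreasing[OF xy(2)])
    fix t assume t: "x \<le> t" "t \<le> y"
    have "((\<lambda>t. DD (Suc n) t + t) has_real_derivative (- exp (-t) * t^n / fact n + 1)) (at t)"
      by (intro DERIV_add deriv_DD DERIV_ident)
    moreover have "exp (-t) * t^n / fact n \<le> 1"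
      using pow_fact_le_exp[of t n] t xy by (simp add: exp_minus field_simps)
    ultimately show "\<exists>y. ((\<lambda>t. DD (Suc n) t + t) has_real_derivative y) (at t) \<and> 0 \<le> y"
      by (intro exI[of _ "- exp (-t) * t^n / fact n + 1"]) auto
  qed
  then show ?thesis by simp
qed

lemma DERIV_exp_minus_lam: "((\<lambda>t. exp (-(lam*t))) has_real_derivative (- lam * exp (-(lam*t)))) (at t)"
  by (auto intro!: derivative_eq_intros)

definition FF :: "real \<Rightarrow> nat \<Rightarrow> real \<Rightarrow> real" where
  "FF lam n t = exp (-(lam*t)) * (1 - DD (Suc n) t) + (1/(1+lam))^(Suc n) * DD (Suc n) ((1+lam)*t)"

lemma deriv_FF:
  assumes lam: "lam > 0"
  shows "(FF lam n has_real_derivative (- lam * exp (-(lam*t)) * (1 - DD (Suc n) t))) (at t)"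
proof -
  have d: "((\<lambda>t. DD (Suc n) ((1+lam)*t)) has_real_derivative
      (- exp (-((1+lam)*t)) * ((1+lam)*t)^n / fact n) * (1+lam)) (at t)"
    by (rule DERIV_chain2[OF deriv_DD]) (auto intro!: derivative_eq_intros)
  note X = DERIV_add[OF DERIV_mult[OF DERIV_exp_minus_lam DERIV_diff[OF DERIV_const deriv_DD]] DERIV_cmult[OF d]]
  have e: "exp (-((1+lam)*t)) = exp (-(lam*t)) * exp (-t)"
    by (simp add: exp_add[symmetric] algebra_simps)
  have p: "(1/(1+lam))^(Suc n) * ((1+lam)*t)^n * (1+lam) = t^n"
  proof -
    have "(1/(1+lam))^(Suc n) * ((1+lam)*t)^n * (1+lam) = ((1/(1+lam))^(Suc n) * (1+lam)^(Suc n)) * t^n"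
      by (simp add: power_mult_distrib)
    also have "(1/(1+lam))^(Suc n) * (1+lam)^(Suc n) = 1"
      using lam by (simp add: power_mult_distrib[symmetric])
    finally show ?thesis by simp
  qed
  have T: "(1/(1+lam))^(Suc n) * ((- exp (-((1+lam)*t)) * ((1+lam)*t)^n / fact n) * (1+lam))
     = - (exp (-(lam*t)) * exp (-t)) * ((1/(1+lam))^(Suc n) * ((1+lam)*t)^n * (1+lam)) / fact n"
    unfolding e by (simp add: mult_ac divide_inverse)
  show ?thesis unfolding FF_def
    apply (rule DERIV_cong[OF X])
    unfolding T p by (simp add: algebra_simps)
qed
lemma FF_interval:
  assumes lam: "lam > 0" and xy: "0 \<le> x" "x \<le> y"
  shows "(1 - DD (Suc n) x) * (exp (-(lam*x)) - exp (-(lam*y))) \<le> FF lam n x - FF lam n y"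
    and "FF lam n x - FF lam n y \<le> (1 - DD (Suc n) y) * (exp (-(lam*x)) - exp (-(lam*y)))"
proof -
  have dexp: "\<And>t. ((\<lambda>t. exp (-(lam*t))) has_real_derivative (- lam * exp (-(lam*t)))) (at t)"
    by (auto intro!: derivative_eq_intros)
  have "FF lam n y - (1 - DD (Suc n) x) * exp (-(lam*y)) \<le> FF lam n x - (1 - DD (Suc n) x) * exp (-(lam*x))"
  proof (rule DERIV_nonpos_imp_nonincreasing[where f="\<lambda>s. FF lam n s - (1 - DD (Suc n) x) * exp (-(lam * s))", OF xy(2)])
    fix s assume s: "x \<le> s" "s \<le> y"
    have "((\<lambda>s. FF lam n s - (1 - DD (Suc n) x) * exp (-(lam * s))) has_real_derivative
       (- lam * exp (-(lam * s)) * (1 - DD (Suc n) s)) - (1 - DD (Suc n) x) * (- lam * exp (-(lam * s)))) (at s)"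
      by (intro DERIV_diff deriv_FF[OF lam] DERIV_cmult dexp)
    moreover have "DD (Suc n) s \<le> DD (Suc n) x" using DD_mono s xy by auto
    then have "lam * exp (-(lam * s)) * DD (Suc n) s \<le> lam * exp (-(lam * s)) * DD (Suc n) x"
      using lam by (intro mult_left_mono) auto
    ultimately show "\<exists>d. ((\<lambda>s. FF lam n s - (1 - DD (Suc n) x) * exp (-(lam * s))) has_real_derivative d) (at s) \<and> d \<le> 0"
      by (intro exI[where x="(- lam * exp (-(lam * s)) * (1 - DD (Suc n) s)) - (1 - DD (Suc n) x) * (- lam * exp (-(lam * s)))"] conjI)
         (auto simp: algebra_simps)
  qed
  then show "(1 - DD (Suc n) x) * (exp (-(lam*x)) - exp (-(lam*y))) \<le> FF lam n x - FF lam n y"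
    by (simp add: algebra_simps)
  have "FF lam n x - (1 - DD (Suc n) y) * exp (-(lam*x)) \<le> FF lam n y - (1 - DD (Suc n) y) * exp (-(lam*y))"
  proof (rule DERIV_nonneg_imp_nondecreasing[where f="\<lambda>s. FF lam n s - (1 - DD (Suc n) y) * exp (-(lam * s))", OF xy(2)])
    fix s assume s: "x \<le> s" "s \<le> y"
    have "((\<lambda>s. FF lam n s - (1 - DD (Suc n) y) * exp (-(lam * s))) has_real_derivative
       (- lam * exp (-(lam * s)) * (1 - DD (Suc n) s)) - (1 - DD (Suc n) y) * (- lam * exp (-(lam * s)))) (at s)"
      by (intro DERIV_diff deriv_FF[OF lam] DERIV_cmult dexp)
    moreover have "DD (Suc n) y \<le> DD (Suc n) s" using DD_mono s xy by auto
    then have "lam * exp (-(lam * s)) * DD (Suc n) y \<le> lam * exp (-(lam * s)) * DD (Suc n) s"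
      using lam by (intro mult_left_mono) auto
    ultimately show "\<exists>d. ((\<lambda>s. FF lam n s - (1 - DD (Suc n) y) * exp (-(lam * s))) has_real_derivative d) (at s) \<and> 0 \<le> d"
      by (intro exI[where x="(- lam * exp (-(lam * s)) * (1 - DD (Suc n) s)) - (1 - DD (Suc n) y) * (- lam * exp (-(lam * s)))"] conjI)
         (auto simp: algebra_simps)
  qed
  then show "FF lam n x - FF lam n y \<le> (1 - DD (Suc n) y) * (exp (-(lam*x)) - exp (-(lam*y)))"
    by (simp add: algebra_simps)
qed

lemma DD_tendsto: "(DD n \<longlongrightarrow> 0) at_top"
proof -
  have "DD n = (\<lambda>s. \<Sum>m<n. s^m / (exp s * fact m))"
    by (auto simp: fun_eq_iff DD_def PP_def sum_distrib_left exp_minus field_simps)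
  moreover have "((\<lambda>s::real. \<Sum>m<n. s^m / (exp s * fact m)) \<longlongrightarrow> (\<Sum>m<n. 0)) at_top"
    apply (intro tendsto_sum)
    subgoal for m using tendsto_divide_zero[OF tendsto_power_div_exp_0[of m], of "fact m"] by simp
    done
  ultimately show ?thesis by simp
qed

lemma FF_0: "FF lam n 0 = (1/(1+lam))^(Suc n)"
  by (simp add: FF_def DD_Suc_0)

lemma FF_seq_tendsto:
  assumes lam: "lam > 0" and h: "h > 0"
  shows "(\<lambda>k. FF lam n (real k * h)) \<longlonglongrightarrow> 0"
proof -
  have lim0: "filterlim (\<lambda>k. h * real k) at_top sequentially"
    by (rule filterlim_tendsto_pos_mult_at_top[OF tendsto_const h filterlim_real_sequentially])
  have "(\<lambda>k. h * real k) = (\<lambda>k. real k * h)" by (auto simp: mult.commute)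
  with lim0 have lim1: "filterlim (\<lambda>k. real k * h) at_top sequentially" by simp
  have lim2: "filterlim (\<lambda>k. (1+lam) * (real k * h)) at_top sequentially"
    using lam by (intro filterlim_tendsto_pos_mult_at_top[OF tendsto_const _ lim1]) auto
  have a: "(\<lambda>k. DD (Suc n) (real k * h)) \<longlonglongrightarrow> 0"
    using filterlim_compose[OF DD_tendsto lim1] by simp
  have b: "(\<lambda>k. DD (Suc n) ((1+lam) * (real k * h))) \<longlonglongrightarrow> 0"
    using filterlim_compose[OF DD_tendsto lim2] by simp
  have c: "(\<lambda>k. exp (-(lam * (real k * h)))) \<longlonglongrightarrow> 0"
    using filterlim_compose[OF exp_at_bot filterlim_uminus_at_bot_at_top[THEN filterlim_compose, OF filterlim_tendsto_pos_mult_at_top[OF tendsto_const lam lim1]]]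
    by (simp add: o_def)
  have "(\<lambda>k. exp (-(lam * (real k * h))) * (1 - DD (Suc n) (real k * h)) + (1/(1+lam))^(Suc n) * DD (Suc n) ((1+lam)*(real k * h)))
     \<longlonglongrightarrow> 0 * (1 - 0) + (1/(1+lam))^(Suc n) * 0"
    by (intro tendsto_intros a b c)
  then show ?thesis by (simp add: FF_def)
qed

lemma exp_seq_tendsto:
  assumes lam: "lam > 0" and h: "h > 0"
  shows "(\<lambda>k. exp (-(lam * (real k * h)))) \<longlonglongrightarrow> 0"
proof -
  have lim0: "filterlim (\<lambda>k. h * real k) at_top sequentially"
    by (rule filterlim_tendsto_pos_mult_at_top[OF tendsto_const h filterlim_real_sequentially])
  have "(\<lambda>k. h * real k) = (\<lambda>k. real k * h)" by (auto simp: mult.commute)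
  with lim0 have lim1: "filterlim (\<lambda>k. real k * h) at_top sequentially" by simp
  show ?thesis
    using filterlim_compose[OF exp_at_bot filterlim_uminus_at_bot_at_top[THEN filterlim_compose, OF filterlim_tendsto_pos_mult_at_top[OF tendsto_const lam lim1]]]
    by (simp add: o_def)
qed

lemma sum_bounds:
  fixes n :: nat and lam h :: real
  assumes lam: "lam > 0" and h: "h > 0"
  defines "w \<equiv> (\<lambda>k::nat. exp (-(lam * (real k * h))) - exp (-(lam * (real (Suc k) * h))))"
  defines "g \<equiv> (\<lambda>k::nat. 1 - DD (Suc n) (real k * h))"
  shows "summable (\<lambda>k. w k * g k)" "summable (\<lambda>k. w k * g (Suc k))"
    "(\<Sum>k. w k * g k) \<le> (1/(1+lam))^(Suc n)"
    "(1/(1+lam))^(Suc n) \<le> (\<Sum>k. w k * g (Suc k))"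
    "(\<Sum>k. w k * g (Suc k)) \<le> (\<Sum>k. w k * g k) + h"
proof -
  have wsum: "w sums 1"
    using telescope_sums'[OF exp_seq_tendsto[OF lam h]] unfolding w_def by simp
  have w0: "w k \<ge> 0" for k
    unfolding w_def using lam h by (auto intro!: mult_right_mono)
  have g01: "0 \<le> g k" "g k \<le> 1" for k
    unfolding g_def using DD_nonneg[of "real k * h" "Suc n"] DD_le_1[of "real k * h" "Suc n"] h by auto
  have Fsum: "(\<lambda>k. FF lam n (real k * h) - FF lam n (real (Suc k) * h)) sums ((1/(1+lam))^(Suc n))"
    using telescope_sums'[OF FF_seq_tendsto[OF lam h, of n]] by (simp add: FF_0)
  have int: "w k * g k \<le> FF lam n (real k * h) - FF lam n (real (Suc k) * h)"
       "FF lam n (real k * h) - FF lam n (real (Suc k) * h) \<le> w k * g (Suc k)" for k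
    using FF_interval[OF lam, of "real k * h" "real (Suc k) * h" n] h
    unfolding w_def g_def by (auto simp: algebra_simps)
  have summ_gen: "summable (\<lambda>k. w k * g (f k))" for f
  proof (rule summable_comparison_test[OF _ sums_summable[OF wsum]])
    show "\<exists>N. \<forall>k\<ge>N. norm (w k * g (f k)) \<le> w k"
      using w0 g01 by (auto intro!: exI[of _ 0] mult_left_le simp: abs_mult)
  qed
  show s1: "summable (\<lambda>k. w k * g k)" using summ_gen[of id] by simp
  show s2: "summable (\<lambda>k. w k * g (Suc k))" using summ_gen[of Suc] by simp
  show "(\<Sum>k. w k * g k) \<le> (1/(1+lam))^(Suc n)"
    using suminf_le[OF int(1) s1 sums_summable[OF Fsum]] sums_unique[OF Fsum] by simp
  show "(1/(1+lam))^(Suc n) \<le> (\<Sum>k. w k * g (Suc k))"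
    using suminf_le[OF int(2) sums_summable[OF Fsum] s2] sums_unique[OF Fsum] by simp
  have dle: "w k * g (Suc k) - w k * g k \<le> w k * h" for k
  proof -
    have "g (Suc k) - g k \<le> h"
      using DD_lip[of "real k * h" "real (Suc k) * h" n] h unfolding g_def by (auto simp: algebra_simps)
    then have "w k * (g (Suc k) - g k) \<le> w k * h" using w0 by (intro mult_left_mono) auto
    then show ?thesis by (simp add: algebra_simps)
  qed
  have "(\<Sum>k. w k * g (Suc k)) - (\<Sum>k. w k * g k) = (\<Sum>k. w k * g (Suc k) - w k * g k)"
    using suminf_diff[OF s2 s1] by simp
  also have "\<dots> \<le> (\<Sum>k. w k * h)"
    by (rule suminf_le[OF dle summable_diff[OF s2 s1] summable_mult2[OF sums_summable[OF wsum]]])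
  also have "\<dots> = h" using sums_unique[OF sums_mult2[OF wsum, of h]] by simp
  finally show "(\<Sum>k. w k * g (Suc k)) \<le> (\<Sum>k. w k * g k) + h" by simp
qed



lemma pcount_zero_iff: "finite (S \<inter> A) \<Longrightarrow> pcount S A = 0 \<longleftrightarrow> S \<inter> A = {}"
  by (simp add: pcount_def)

lemma pcount_pos_iff: "finite (S \<inter> A) \<Longrightarrow> 1 \<le> pcount S A \<longleftrightarrow> S \<inter> A \<noteq> {}"
  by (auto simp: pcount_def Suc_le_eq card_gt_0_iff)

lemma os_sub: "p \<in> S \<Longrightarrow> {y \<in> insert 0 P. out_edge S 0 y} \<subseteq> P \<inter> (ball 0 (norm p) - {0})"
  by (auto simp: out_edge_def dist_norm not_le[symmetric])

lemma os_sup: "S \<inter> cball 0 r = {} \<Longrightarrow> P \<inter> (cball 0 r - {0}) \<subseteq> {y \<in> insert 0 P. out_edge S 0 y}"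
  by (auto simp: out_edge_def dist_norm)

lemma os_zero: "0 \<in> S \<Longrightarrow> {y \<in> insert (0::real^2) P. out_edge S 0 y} = {}"
  by (auto simp: out_edge_def)

lemma os_lower:
  assumes "S \<inter> cball 0 r = {}" "p \<in> S" "finite (P \<inter> ball 0 (norm p))"
    "N \<le> card (P \<inter> (cball 0 r - {0}))"
  shows "N \<le> out_degree_origin P S"
proof -
  have "{y \<in> insert 0 P. out_edge S 0 y} \<subseteq> P \<inter> ball 0 (norm p)"
    using os_sub[OF assms(2), of P] by blast
  then have "finite {y \<in> insert 0 P. out_edge S 0 y}"
    using assms(3) by (rule finite_subset)
  then show ?thesis using card_mono[OF _ os_sup[OF assms(1), of P]] assms(4)
    unfolding out_degree_origin_def by linarith
qed

lemma os_upper: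
  assumes "p \<in> S" "norm p \<le> r" "finite (P \<inter> (cball 0 r - {0}))"
  shows "out_degree_origin P S \<le> card (P \<inter> (cball 0 r - {0}))"
proof -
  have "{y \<in> insert 0 P. out_edge S 0 y} \<subseteq> P \<inter> (cball 0 r - {0})"
  proof -
    have "ball 0 (norm p) \<subseteq> cball 0 r" using assms(2) by auto
    then show ?thesis using os_sub[OF assms(1), of P] by blast
  qed
  then show ?thesis unfolding out_degree_origin_def by (rule card_mono[OF assms(3)])
qed

lemma bounded_in_nat_cball:
  assumes "bounded (B::(real^2) set)" obtains j :: nat where "B \<subseteq> cball 0 (real j)"
proof -
  obtain a where a: "\<forall>x\<in>B. norm x \<le> a" using assms bounded_iff by blast
  obtain j :: nat where "a \<le> real j" using real_arch_simple by blast
  with a have "B \<subseteq> cball 0 (real j)" by (auto simp: dist_norm)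
  then show ?thesis using that by blast
qed

lemma bd_punct: "bounded (cball (0::real^2) r - {0})"
  by (rule bounded_subset[OF bounded_cball]) auto

lemma os_rat_char:
  fixes P S :: "(real^2) set"
  assumes lf: "\<forall>A. bounded A \<longrightarrow> finite (P \<inter> A) \<and> finite (S \<inter> A)" and Sne: "S \<noteq> {}" and N: "N \<ge> 1"
  shows "N \<le> out_degree_origin P S \<longleftrightarrow> (\<exists>r\<in>\<rat>. pcount S (cball 0 r) = 0 \<and> N \<le> pcount P (cball 0 r - {0}))"
proof -
  have lfP: "\<And>A. bounded A \<Longrightarrow> finite (P \<inter> A)" and lfS: "\<And>A. bounded A \<Longrightarrow> finite (S \<inter> A)"
    using lf by blast+
  show ?thesis
  proof
  assume "\<exists>r\<in>\<rat>. pcount S (cball 0 r) = 0 \<and> N \<le> pcount P (cball 0 r - {0})"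
  then obtain r where r: "pcount S (cball 0 r) = 0" "N \<le> pcount P (cball 0 r - {0})" by blast
  obtain p where p: "p \<in> S" using Sne by blast
  have "S \<inter> cball 0 r = {}" using r(1) pcount_zero_iff[OF lfS[OF bounded_cball]] by blast
  moreover have "finite (P \<inter> ball 0 (norm p))" by (rule lfP[OF bounded_ball])
  ultimately show "N \<le> out_degree_origin P S"
    using os_lower[OF _ p, of r P N] r(2) unfolding pcount_def by blast
next
  let ?O = "{y \<in> insert 0 P. out_edge S 0 y}"
  assume a: "N \<le> out_degree_origin P S"
  then have cO: "N \<le> card ?O" by (simp add: out_degree_origin_def)
  then have c0: "card ?O \<noteq> 0" using N by linarith
  then have fO: "finite ?O" and neO: "?O \<noteq> {}" using card_gt_0_iff by blast+
  define r0 where "r0 = Max (norm ` ?O)"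
  have "r0 \<in> norm ` ?O" unfolding r0_def using fO neO by (intro Max_in) auto
  then obtain y0 where y0: "r0 = norm y0" "y0 \<in> ?O" by (rule imageE)
  have "out_edge S 0 y0" using y0(2) by blast
  then have Sr0: "S \<inter> cball 0 r0 = {}" by (simp add: out_edge_def dist_norm y0(1))
  have Ole: "norm y \<le> r0" if "y \<in> ?O" for y
    unfolding r0_def by (rule Max_ge[OF finite_imageI[OF fO] imageI[OF that]])
  define F where "F = S \<inter> cball 0 (r0 + 1)"
  have fF: "finite F" unfolding F_def by (rule lfS[OF bounded_cball])
  define d where "d = Min (insert (r0 + 1) (norm ` F))"
  have d_gt: "r0 < d"
  proof -
    have "\<forall>x\<in>insert (r0 + 1) (norm ` F). r0 < x"
      using Sr0 by (auto simp: F_def dist_norm)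
    then show ?thesis unfolding d_def using fF by (subst Min_gr_iff) auto
  qed
  have d_le: "d \<le> r0 + 1" unfolding d_def using fF by (auto intro: Min_le)
  obtain r where r: "r \<in> \<rat>" "r0 < r" "r < d" using Rats_dense_in_real[OF d_gt] by blast
  have Sr: "S \<inter> cball 0 r = {}"
  proof (rule ccontr)
    assume "S \<inter> cball 0 r \<noteq> {}"
    then obtain p where p: "p \<in> S" "norm p \<le> r" by (auto simp: dist_norm)
    then have "p \<in> F" using r d_le by (auto simp: F_def dist_norm)
    then have "d \<le> norm p" unfolding d_def using fF by (auto intro: Min_le)
    then show False using p r by linarith
  qed
  have sub: "?O \<subseteq> P \<inter> (cball 0 r - {0})"
  proof
    fix y assume y: "y \<in> ?O"
    then have "norm y \<le> r0" by (rule Ole)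
    moreover have "y \<noteq> 0" "y \<in> insert 0 P" using y by (auto simp: out_edge_def)
    ultimately show "y \<in> P \<inter> (cball 0 r - {0})" using r by (auto simp: dist_norm)
  qed
  have "finite (P \<inter> (cball 0 r - {0}))" by (rule lfP[OF bd_punct])
  then have "card ?O \<le> pcount P (cball 0 r - {0})"
    unfolding pcount_def using card_mono sub by blast
  moreover have "pcount S (cball 0 r) = 0" using Sr by (simp add: pcount_def)
  ultimately show "\<exists>r\<in>\<rat>. pcount S (cball 0 r) = 0 \<and> N \<le> pcount P (cball 0 r - {0})"
    using r(1) cO by (intro bexI[of _ r]) auto
qed
qed

lemma os_empty: "out_degree_origin P {} = card (P - {0})"
proof -
  have "{y \<in> insert 0 P. out_edge {} 0 y} = P - {0}" by (auto simp: out_edge_def)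
  then show ?thesis by (simp add: out_degree_origin_def)
qed

lemma card_char:
  fixes P :: "(real^2) set"
  assumes lf: "\<And>A. bounded A \<Longrightarrow> finite (P \<inter> A)" and N: "N \<ge> 1"
  shows "N \<le> card (P - {0}) \<longleftrightarrow>
    (\<exists>j::nat. \<exists>c. N \<le> c \<and> pcount P (cball 0 (real j) - {0}) = c \<and> (\<forall>j'::nat. pcount P (cball 0 (real j') - {0}) \<le> c))"
proof
  assume a: "N \<le> card (P - {0})"
  then have "card (P - {0}) \<noteq> 0" using N by linarith
  then have f: "finite (P - {0})" by (metis card.infinite)
  obtain j where j: "P - {0} \<subseteq> cball 0 (real j)"
    by (rule bounded_in_nat_cball[OF finite_imp_bounded[OF f]])
  have eq: "P \<inter> (cball 0 (real j) - {0}) = P - {0}" using j by auto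
  have "pcount P (cball 0 (real j') - {0}) \<le> card (P - {0})" for j'
    unfolding pcount_def using f by (intro card_mono) auto
  then show "\<exists>j::nat. \<exists>c. N \<le> c \<and> pcount P (cball 0 (real j) - {0}) = c \<and> (\<forall>j'::nat. pcount P (cball 0 (real j') - {0}) \<le> c)"
    using a eq by (intro exI[of _ j] exI[of _ "card (P - {0})"]) (auto simp: pcount_def)
next
  assume "\<exists>j::nat. \<exists>c. N \<le> c \<and> pcount P (cball 0 (real j) - {0}) = c \<and> (\<forall>j'::nat. pcount P (cball 0 (real j') - {0}) \<le> c)"
  then obtain j c where jc: "N \<le> c" "pcount P (cball 0 (real j) - {0}) = c" "\<forall>j'::nat. pcount P (cball 0 (real j') - {0}) \<le> c"
    by blast
  have f: "finite (P - {0})"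
  proof (rule ccontr)
    assume "infinite (P - {0})"
    then obtain B where B: "finite B" "card B = Suc c" "B \<subseteq> P - {0}"
      using infinite_arbitrarily_large by blast
    obtain j' where j': "B \<subseteq> cball 0 (real j')"
      by (rule bounded_in_nat_cball[OF finite_imp_bounded[OF B(1)]])
    have "B \<subseteq> P \<inter> (cball 0 (real j') - {0})" using B j' by auto
    moreover have "finite (P \<inter> (cball 0 (real j') - {0}))" by (rule lf[OF bd_punct])
    ultimately have "Suc c \<le> pcount P (cball 0 (real j') - {0})"
      unfolding pcount_def using card_mono B(2) by metis
    then show False using jc(3) by (metis not_less_eq_eq)
  qed
  have "pcount P (cball 0 (real j) - {0}) \<le> card (P - {0})"
    unfolding pcount_def using f by (intro card_mono) auto
  then show "N \<le> card (P - {0})" using jc by linarith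
qed



lemma (in prob_space) tail_gen:
  assumes ev: "\<And>k. {\<omega>\<in>space M. c \<omega> = k} \<in> events"
    and pr: "\<And>k. prob {\<omega>\<in>space M. c \<omega> = k} = mu^k / fact k * exp (-mu)"
  shows "prob {\<omega>\<in>space M. N \<le> (c \<omega> :: nat)} = 1 - DD N mu"
proof -
  have evl: "{\<omega>\<in>space M. c \<omega> < K} \<in> events" for K
  proof -
    have "{\<omega>\<in>space M. c \<omega> < K} = (\<Union>k\<in>{..<K}. {\<omega>\<in>space M. c \<omega> = k})" by auto
    then show ?thesis using ev by auto
  qed
  have pl: "prob {\<omega>\<in>space M. c \<omega> < K} = (\<Sum>k<K. mu^k / fact k * exp (-mu))" for K
  proof (induction K)
    case 0
    then show ?case by simp
  next
    case (Suc K)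
    have "{\<omega>\<in>space M. c \<omega> < Suc K} = {\<omega>\<in>space M. c \<omega> < K} \<union> {\<omega>\<in>space M. c \<omega> = K}" by auto
    moreover have "prob ({\<omega>\<in>space M. c \<omega> < K} \<union> {\<omega>\<in>space M. c \<omega> = K}) = prob {\<omega>\<in>space M. c \<omega> < K} + prob {\<omega>\<in>space M. c \<omega> = K}"
      by (rule finite_measure_Union[OF evl ev]) auto
    ultimately have "prob {\<omega>\<in>space M. c \<omega> < Suc K} = prob {\<omega>\<in>space M. c \<omega> < K} + prob {\<omega>\<in>space M. c \<omega> = K}"
      by simp
    then show ?case using Suc pr by simp
  qed
  have "{\<omega>\<in>space M. N \<le> c \<omega>} = space M - {\<omega>\<in>space M. c \<omega> < N}" by auto
  then have "prob {\<omega>\<in>space M. N \<le> c \<omega>} = 1 - prob {\<omega>\<in>space M. c \<omega> < N}"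
    using prob_compl[OF evl] by simp
  also have "prob {\<omega>\<in>space M. c \<omega> < N} = DD N mu"
    unfolding pl DD_def PP_def by (simp add: sum_distrib_left algebra_simps)
  finally show ?thesis .
qed

locale ppp =
  fixes M :: "'w measure" and Phi Psi :: "'w \<Rightarrow> (real^2) set" and lam :: real
  assumes ip: "indep_poisson_pps M Phi 1 Psi lam" and lam: "lam > 0"
begin

lemma PS: "prob_space M" using ip by (simp add: indep_poisson_pps_def)

sublocale prob_space M by (rule PS)

lemma lfPhi: "\<omega> \<in> space M \<Longrightarrow> bounded A \<Longrightarrow> finite (Phi \<omega> \<inter> A)"
  using ip by (simp add: indep_poisson_pps_def)

lemma lfPsi: "\<omega> \<in> space M \<Longrightarrow> bounded A \<Longrightarrow> finite (Psi \<omega> \<inter> A)"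
  using ip by (simp add: indep_poisson_pps_def)

lemma measPhi: "A \<in> sets lborel \<Longrightarrow> bounded A \<Longrightarrow> (\<lambda>\<omega>. pcount (Phi \<omega>) A) \<in> measurable M (count_space UNIV)"
  using ip by (simp add: indep_poisson_pps_def)

lemma measPsi: "A \<in> sets lborel \<Longrightarrow> bounded A \<Longrightarrow> (\<lambda>\<omega>. pcount (Psi \<omega>) A) \<in> measurable M (count_space UNIV)"
  using ip by (simp add: indep_poisson_pps_def)

lemma evPhi: "A \<in> sets lborel \<Longrightarrow> bounded A \<Longrightarrow> {\<omega>\<in>space M. Q (pcount (Phi \<omega>) A)} \<in> events"
proof -
  assume a: "A \<in> sets lborel" "bounded A"
  have "{\<omega>\<in>space M. Q (pcount (Phi \<omega>) A)} = (\<lambda>\<omega>. pcount (Phi \<omega>) A) -` {k. Q k} \<inter> space M" by auto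
  then show ?thesis using measurable_sets[OF measPhi[OF a], of "{k. Q k}"] by simp
qed

lemma evPsi: "A \<in> sets lborel \<Longrightarrow> bounded A \<Longrightarrow> {\<omega>\<in>space M. Q (pcount (Psi \<omega>) A)} \<in> events"
proof -
  assume a: "A \<in> sets lborel" "bounded A"
  have "{\<omega>\<in>space M. Q (pcount (Psi \<omega>) A)} = (\<lambda>\<omega>. pcount (Psi \<omega>) A) -` {k. Q k} \<inter> space M" by auto
  then show ?thesis using measurable_sets[OF measPsi[OF a], of "{k. Q k}"] by simp
qed

lemma tailPhi: "A \<in> sets lborel \<Longrightarrow> bounded A \<Longrightarrow>
   prob {\<omega>\<in>space M. N \<le> pcount (Phi \<omega>) A} = 1 - DD N (measure lborel A)"
  by (rule tail_gen) (use ip evPhi in \<open>auto simp: indep_poisson_pps_def\<close>)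

lemma tailPsi: "A \<in> sets lborel \<Longrightarrow> bounded A \<Longrightarrow>
   prob {\<omega>\<in>space M. N \<le> pcount (Psi \<omega>) A} = 1 - DD N (lam * measure lborel A)"
  by (rule tail_gen) (use ip evPsi in \<open>auto simp: indep_poisson_pps_def\<close>)

lemma zeroPsi: "A \<in> sets lborel \<Longrightarrow> bounded A \<Longrightarrow>
   prob {\<omega>\<in>space M. pcount (Psi \<omega>) A = 0} = exp (-(lam * measure lborel A))"
  using ip by (simp add: indep_poisson_pps_def)

lemma indep3:
  assumes A0: "A0 \<in> sets lborel" "bounded A0"
    and B0: "B0 \<in> sets lborel" "bounded B0" and B1: "B1 \<in> sets lborel" "bounded B1"
    and dis: "B0 \<inter> B1 = {}"
  shows "prob {\<omega>\<in>space M. pcount (Phi \<omega>) A0 \<in> S0 \<and> pcount (Psi \<omega>) B0 \<in> S1 \<and> pcount (Psi \<omega>) B1 \<in> S2}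
    = prob {\<omega>\<in>space M. pcount (Phi \<omega>) A0 \<in> S0} * prob {\<omega>\<in>space M. pcount (Psi \<omega>) B0 \<in> S1}
      * prob {\<omega>\<in>space M. pcount (Psi \<omega>) B1 \<in> S2}"
proof -
  define A :: "nat \<Rightarrow> (real^2) set" where "A = (\<lambda>i. if i = 0 then A0 else {})"
  define B :: "nat \<Rightarrow> (real^2) set" where "B = (\<lambda>i. if i = 0 then B0 else B1)"
  define I :: "nat set" where "I = {0, 1}"
  define X where "X = (\<lambda>j \<omega>. case j of Inl i \<Rightarrow> pcount (Phi \<omega>) (A i) | Inr i \<Rightarrow> pcount (Psi \<omega>) (B i))"
  have ind: "indep_vars (\<lambda>_. count_space UNIV) X (Inl ` I \<union> Inr ` I)"
  proof -
    have "finite I" by (simp add: I_def)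
    moreover have "\<forall>i\<in>I. A i \<in> sets lborel \<and> bounded (A i) \<and> B i \<in> sets lborel \<and> bounded (B i)"
      using A0 B0 B1 by (auto simp: I_def A_def B_def)
    moreover have "disjoint_family_on A I" by (auto simp: disjoint_family_on_def I_def A_def)
    moreover have "disjoint_family_on B I" using dis by (auto simp: disjoint_family_on_def I_def B_def)
    ultimately show ?thesis using ip unfolding indep_poisson_pps_def X_def by blast
  qed
  define J :: "(nat + nat) set" where "J = {Inl 0, Inr 0, Inr 1}"
  define F :: "nat + nat \<Rightarrow> nat set" where "F = (\<lambda>j. case j of Inl _ \<Rightarrow> S0 | Inr i \<Rightarrow> if i = 0 then S1 else S2)"
  have "prob (\<Inter>j\<in>J. X j -` F j \<inter> space M) = (\<Prod>j\<in>J. prob (X j -` F j \<inter> space M))"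
    by (rule indep_varsD[OF ind]) (auto simp: J_def I_def)
  moreover have "(\<Inter>j\<in>J. X j -` F j \<inter> space M) =
    {\<omega>\<in>space M. pcount (Phi \<omega>) A0 \<in> S0 \<and> pcount (Psi \<omega>) B0 \<in> S1 \<and> pcount (Psi \<omega>) B1 \<in> S2}"
    by (auto simp: J_def X_def F_def A_def B_def)
  moreover have "(\<Prod>j\<in>J. prob (X j -` F j \<inter> space M)) =
     prob (X (Inl 0) -` F (Inl 0) \<inter> space M) * (prob (X (Inr 0) -` F (Inr 0) \<inter> space M) * prob (X (Inr 1) -` F (Inr 1) \<inter> space M))"
    by (simp add: J_def)
  moreover have "X (Inl 0) -` F (Inl 0) \<inter> space M = {\<omega>\<in>space M. pcount (Phi \<omega>) A0 \<in> S0}"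
    "X (Inr 0) -` F (Inr 0) \<inter> space M = {\<omega>\<in>space M. pcount (Psi \<omega>) B0 \<in> S1}"
    "X (Inr 1) -` F (Inr 1) \<inter> space M = {\<omega>\<in>space M. pcount (Psi \<omega>) B1 \<in> S2}"
    by (auto simp: X_def F_def A_def B_def)
  ultimately show ?thesis by (simp add: mult.assoc)
qed

end



definition rho :: "real \<Rightarrow> nat \<Rightarrow> real" where "rho h k = sqrt (real k * h / pi)"

lemma CC_meas: "cball (0::real^2) (rho h k) \<in> sets lborel" "bounded (cball (0::real^2) (rho h k))"
  "cball (0::real^2) (rho h k) - {0} \<in> sets lborel" "bounded (cball (0::real^2) (rho h k) - {0})"
  "cball (0::real^2) (rho h (Suc k)) - cball 0 (rho h k) \<in> sets lborel"
  "bounded (cball (0::real^2) (rho h (Suc k)) - cball 0 (rho h k))"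
  by (auto intro: bounded_subset[OF bounded_cball])

lemma rho_nonneg: "h \<ge> 0 \<Longrightarrow> rho h k \<ge> 0"
  by (simp add: rho_def)

lemma CC_mono: "h \<ge> 0 \<Longrightarrow> k \<le> k' \<Longrightarrow> cball (0::real^2) (rho h k) \<subseteq> cball 0 (rho h k')"
  unfolding rho_def by (intro cball_subset_cball_iff[THEN iffD2] disjI1)
    (auto intro!: real_sqrt_le_mono divide_right_mono mult_right_mono)

lemma CC_measure: "h \<ge> 0 \<Longrightarrow> measure lborel (cball (0::real^2) (rho h k)) = real k * h"
  by (simp add: content_cball eval_unit_ball_vol rho_nonneg) (simp add: rho_def)

lemma CC_punct_measure: "h \<ge> 0 \<Longrightarrow> measure lborel (cball (0::real^2) (rho h k) - {0}) = real k * h"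
  by (subst measure_Diff_null_set) (auto simp: CC_measure finite_imp_null_set_lborel)

lemma CC_ann_measure: "h \<ge> 0 \<Longrightarrow> measure lborel (cball (0::real^2) (rho h (Suc k)) - cball 0 (rho h k)) = h"
  by (subst measure_Diff) (auto simp: CC_measure CC_mono emeasure_cball[OF rho_nonneg] algebra_simps)

lemma CC_0: "cball (0::real^2) (rho h 0) = {0}"
  by (simp add: rho_def)

lemma CC_cover:
  assumes h: "h > 0" shows "\<exists>k. p \<in> cball (0::real^2) (rho h k)"
proof -
  obtain k :: nat where k: "norm p ^ 2 * pi / h \<le> real k" using real_arch_simple by blast
  then have "norm p ^ 2 \<le> real k * h / pi" using h by (simp add: field_simps)
  then have "norm p \<le> rho h k" unfolding rho_def by (simp add: real_le_rsqrt)
  then show ?thesis by (auto simp: dist_norm)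
qed


context ppp
begin

lemma evPsi_eq: "A \<in> sets lborel \<Longrightarrow> bounded A \<Longrightarrow> {\<omega>\<in>space M. pcount (Psi \<omega>) A = k} \<in> events"
  using evPsi[of A "\<lambda>c. c = k"] by simp
lemma evPhi_eq: "A \<in> sets lborel \<Longrightarrow> bounded A \<Longrightarrow> {\<omega>\<in>space M. pcount (Phi \<omega>) A = k} \<in> events"
  using evPhi[of A "\<lambda>c. c = k"] by simp
lemma evPhi_ge: "A \<in> sets lborel \<Longrightarrow> bounded A \<Longrightarrow> {\<omega>\<in>space M. k \<le> pcount (Phi \<omega>) A} \<in> events"
  using evPhi[of A "\<lambda>c. k \<le> c"] by simp
lemma evPhi_le: "A \<in> sets lborel \<Longrightarrow> bounded A \<Longrightarrow> {\<omega>\<in>space M. pcount (Phi \<omega>) A \<le> k} \<in> events"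
  using evPhi[of A "\<lambda>c. c \<le> k"] by simp

definition TT :: "nat \<Rightarrow> 'w set" where
  "TT m = {\<omega>\<in>space M. m \<le> out_degree_origin (Phi \<omega>) (Psi \<omega>)}"

definition ZZ :: "'w set" where "ZZ = {\<omega>\<in>space M. Psi \<omega> = {}}"

lemma ZZ_eq: "ZZ = (\<Inter>j::nat. {\<omega>\<in>space M. pcount (Psi \<omega>) (cball 0 (real j)) = 0})"
proof (intro equalityI subsetI)
  fix \<omega> assume "\<omega> \<in> ZZ" then show "\<omega> \<in> (\<Inter>j::nat. {\<omega>\<in>space M. pcount (Psi \<omega>) (cball 0 (real j)) = 0})"
    by (auto simp: ZZ_def pcount_def)
next
  fix \<omega> assume a: "\<omega> \<in> (\<Inter>j::nat. {\<omega>\<in>space M. pcount (Psi \<omega>) (cball 0 (real j)) = 0})"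
  then have sp: "\<omega> \<in> space M" by auto
  have "Psi \<omega> \<inter> cball 0 (real j) = {}" for j
    using a pcount_zero_iff[OF lfPsi[OF sp bounded_cball]] by blast
  moreover have "p \<in> Psi \<omega> \<Longrightarrow> False" for p
  proof -
    assume p: "p \<in> Psi \<omega>"
    have "bounded {p}" by simp
    then obtain j where "{p} \<subseteq> cball 0 (real j)" by (rule bounded_in_nat_cball)
    then show False using p calculation[of j] by auto
  qed
  ultimately show "\<omega> \<in> ZZ" using sp by (auto simp: ZZ_def)
qed

lemma ZZ_ev: "ZZ \<in> events"
  unfolding ZZ_eq by (intro sets.countable_INT image_subsetI evPsi_eq) auto

lemma ZZ_null: "prob ZZ = 0"
proof -
  have le: "prob ZZ \<le> exp (-(lam * (real k * 1)))" for k
  proof -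
    have "ZZ \<subseteq> {\<omega>\<in>space M. pcount (Psi \<omega>) (cball 0 (rho 1 k)) = 0}"
      by (auto simp: ZZ_def pcount_def)
    then have "prob ZZ \<le> prob {\<omega>\<in>space M. pcount (Psi \<omega>) (cball 0 (rho 1 k)) = 0}"
      using evPsi[OF CC_meas(1,2)] by (intro finite_measure_mono) auto
    also have "\<dots> = exp (-(lam * (real k * 1)))"
      using zeroPsi[OF CC_meas(1,2)] CC_measure[of 1 k] by simp
    finally show ?thesis .
  qed
  have "prob ZZ \<le> 0"
    by (rule LIMSEQ_le_const[OF exp_seq_tendsto[OF lam, of 1]]) (use le in auto)
  then show ?thesis using measure_nonneg[of M ZZ] by linarith
qed

lemma TT_ev: "TT (Suc n) \<in> events"
proof -
  define R where "R = (\<Union>r\<in>\<rat>. {\<omega>\<in>space M. pcount (Psi \<omega>) (cball 0 r) = 0} \<inter> {\<omega>\<in>space M. Suc n \<le> pcount (Phi \<omega>) (cball 0 r - {0})})"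
  define X where "X = (\<Union>j::nat. \<Union>c\<in>{Suc n..}. {\<omega>\<in>space M. pcount (Phi \<omega>) (cball 0 (real j) - {0}) = c}
     \<inter> (\<Inter>j'::nat. {\<omega>\<in>space M. pcount (Phi \<omega>) (cball 0 (real j') - {0}) \<le> c}))"
  have bd: "bounded (cball (0::real^2) r - {0})" for r by (rule bd_punct)
  have bs: "cball (0::real^2) r - {0} \<in> sets lborel" for r by simp
  have R: "R \<in> events" unfolding R_def
    by (intro sets.countable_UN' countable_rat sets.Int evPsi_eq evPhi_ge bd bs image_subsetI) auto
  have X: "X \<in> events" unfolding X_def
    by (intro sets.countable_UN sets.countable_INT sets.Int evPhi_eq evPhi_le bd bs image_subsetI) auto
  have eq: "TT (Suc n) = ((space M - ZZ) \<inter> R) \<union> (ZZ \<inter> X)"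
  proof (intro equalityI subsetI)
    fix \<omega> assume w: "\<omega> \<in> TT (Suc n)"
    then have sp: "\<omega> \<in> space M" and d: "Suc n \<le> out_degree_origin (Phi \<omega>) (Psi \<omega>)" by (auto simp: TT_def)
    have lf: "\<forall>A. bounded A \<longrightarrow> finite (Phi \<omega> \<inter> A) \<and> finite (Psi \<omega> \<inter> A)"
      using lfPhi[OF sp] lfPsi[OF sp] by blast
    have cc: "Suc n \<le> card (Phi \<omega> - {0}) \<longleftrightarrow> (\<exists>j::nat. \<exists>c. Suc n \<le> c \<and> pcount (Phi \<omega>) (cball 0 (real j) - {0}) = c \<and> (\<forall>j'::nat. pcount (Phi \<omega>) (cball 0 (real j') - {0}) \<le> c))"
      using card_char[OF lfPhi[OF sp], of "Suc n"] by simp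
    show "\<omega> \<in> ((space M - ZZ) \<inter> R) \<union> (ZZ \<inter> X)"
    proof (cases "Psi \<omega> = {}")
      case True
      then have "Suc n \<le> card (Phi \<omega> - {0})" using d os_empty by simp
      then obtain j c where jc: "Suc n \<le> c" "pcount (Phi \<omega>) (cball 0 (real j) - {0}) = c" "\<forall>j'::nat. pcount (Phi \<omega>) (cball 0 (real j') - {0}) \<le> c"
        using cc by blast
      have "\<omega> \<in> X" using sp jc unfolding X_def by (intro UN_I[of j] UN_I[of c] IntI) auto
      then show ?thesis using True sp by (auto simp: ZZ_def)
    next
      case False
      then have "\<exists>r\<in>\<rat>. pcount (Psi \<omega>) (cball 0 r) = 0 \<and> Suc n \<le> pcount (Phi \<omega>) (cball 0 r - {0})"
        using os_rat_char[OF lf False, of "Suc n"] d by simp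
      then obtain r where r: "r \<in> \<rat>" "pcount (Psi \<omega>) (cball 0 r) = 0" "Suc n \<le> pcount (Phi \<omega>) (cball 0 r - {0})" by blast
      have "\<omega> \<in> R" using sp r unfolding R_def by (intro UN_I[of r] IntI) auto
      then show ?thesis using False sp by (auto simp: ZZ_def)
    qed
  next
    fix \<omega> assume w: "\<omega> \<in> ((space M - ZZ) \<inter> R) \<union> (ZZ \<inter> X)"
    then have sp: "\<omega> \<in> space M" by (auto simp: ZZ_def)
    have lf: "\<forall>A. bounded A \<longrightarrow> finite (Phi \<omega> \<inter> A) \<and> finite (Psi \<omega> \<inter> A)"
      using lfPhi[OF sp] lfPsi[OF sp] by blast
    have cc: "Suc n \<le> card (Phi \<omega> - {0}) \<longleftrightarrow> (\<exists>j::nat. \<exists>c. Suc n \<le> c \<and> pcount (Phi \<omega>) (cball 0 (real j) - {0}) = c \<and> (\<forall>j'::nat. pcount (Phi \<omega>) (cball 0 (real j') - {0}) \<le> c))"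
      using card_char[OF lfPhi[OF sp], of "Suc n"] by simp
    show "\<omega> \<in> TT (Suc n)"
    proof (cases "Psi \<omega> = {}")
      case True
      then have "\<omega> \<in> X" using w by (auto simp: ZZ_def)
      then have "\<exists>j::nat. \<exists>c. Suc n \<le> c \<and> pcount (Phi \<omega>) (cball 0 (real j) - {0}) = c \<and> (\<forall>j'::nat. pcount (Phi \<omega>) (cball 0 (real j') - {0}) \<le> c)"
        unfolding X_def by blast
      then have "Suc n \<le> card (Phi \<omega> - {0})" using cc by blast
      then show ?thesis using True sp os_empty by (simp add: TT_def)
    next
      case False
      then have "\<omega> \<in> R" using w sp by (auto simp: ZZ_def)
      then have "\<exists>r\<in>\<rat>. pcount (Psi \<omega>) (cball 0 r) = 0 \<and> Suc n \<le> pcount (Phi \<omega>) (cball 0 r - {0})"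
        unfolding R_def by blast
      then show ?thesis using os_rat_char[OF lf False, of "Suc n"] sp by (simp add: TT_def)
    qed
  qed
  show ?thesis unfolding eq using R X ZZ_ev by auto
qed

end



context ppp
begin

definition GG :: "real \<Rightarrow> nat \<Rightarrow> nat \<Rightarrow> 'w set" where
  "GG h n k = {\<omega>\<in>space M. pcount (Phi \<omega>) (cball 0 (rho h k) - {0}) \<in> {Suc n..} \<and>
      pcount (Psi \<omega>) (cball 0 (rho h k)) \<in> {0} \<and> pcount (Psi \<omega>) (cball 0 (rho h (Suc k)) - cball 0 (rho h k)) \<in> {1..}}"

definition HH :: "real \<Rightarrow> nat \<Rightarrow> nat \<Rightarrow> 'w set" where
  "HH h n k = {\<omega>\<in>space M. pcount (Phi \<omega>) (cball 0 (rho h (Suc k)) - {0}) \<in> {Suc n..} \<and>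
      pcount (Psi \<omega>) (cball 0 (rho h k)) \<in> {0} \<and> pcount (Psi \<omega>) (cball 0 (rho h (Suc k)) - cball 0 (rho h k)) \<in> {1..}}"

lemma DD_1: "DD (Suc 0) x = exp (-x)" by (simp add: DD_def PP_def)

lemma exp_split: "exp (-(lam * (real (Suc k) * h))) = exp (-(lam * (real k * h))) * exp (-(lam * h))"
  by (simp add: exp_add[symmetric] algebra_simps)

lemma gen: "P = (1 - d) * a * (1 - b) \<Longrightarrow> P = (a - a * b) * (1 - (d::real))"
  by (simp add: algebra_simps)

lemma GG_ev: "GG h n k \<in> events"
  unfolding GG_def
  by (intro sets.Int sets.sets_Collect_conj evPhi evPsi CC_meas)

lemma HH_ev: "HH h n k \<in> events"
  unfolding HH_def
  by (intro sets.Int sets.sets_Collect_conj evPhi evPsi CC_meas)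

lemma prob_GG:
  assumes h: "h > 0"
  shows "prob (GG h n k) = (exp (-(lam * (real k * h))) - exp (-(lam * (real (Suc k) * h)))) * (1 - DD (Suc n) (real k * h))"
proof -
  have "prob (GG h n k) = prob {\<omega>\<in>space M. pcount (Phi \<omega>) (cball 0 (rho h k) - {0}) \<in> {Suc n..}}
     * prob {\<omega>\<in>space M. pcount (Psi \<omega>) (cball 0 (rho h k)) \<in> {0}}
     * prob {\<omega>\<in>space M. pcount (Psi \<omega>) (cball 0 (rho h (Suc k)) - cball 0 (rho h k)) \<in> {1..}}"
    unfolding GG_def by (rule indep3) (auto intro: CC_meas)
  also have "prob {\<omega>\<in>space M. pcount (Phi \<omega>) (cball 0 (rho h k) - {0}) \<in> {Suc n..}} = 1 - DD (Suc n) (real k * h)"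
    using tailPhi[OF CC_meas(3,4)[of h k], where N="Suc n"] CC_punct_measure[of h k] h by simp
  also have "prob {\<omega>\<in>space M. pcount (Psi \<omega>) (cball 0 (rho h k)) \<in> {0}} = exp (-(lam * (real k * h)))"
    using zeroPsi[OF CC_meas(1,2)[of h k]] CC_measure[of h k] h by simp
  also have "prob {\<omega>\<in>space M. pcount (Psi \<omega>) (cball 0 (rho h (Suc k)) - cball 0 (rho h k)) \<in> {1..}} = 1 - exp (-(lam * h))"
    using tailPsi[OF CC_meas(5,6)[of h k], where N=1] CC_ann_measure[of h k] h by (simp add: DD_1)
  finally show ?thesis unfolding exp_split by (rule gen)
qed

lemma prob_HH:
  assumes h: "h > 0"
  shows "prob (HH h n k) = (exp (-(lam * (real k * h))) - exp (-(lam * (real (Suc k) * h)))) * (1 - DD (Suc n) (real (Suc k) * h))"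
proof -
  have "prob (HH h n k) = prob {\<omega>\<in>space M. pcount (Phi \<omega>) (cball 0 (rho h (Suc k)) - {0}) \<in> {Suc n..}}
     * prob {\<omega>\<in>space M. pcount (Psi \<omega>) (cball 0 (rho h k)) \<in> {0}}
     * prob {\<omega>\<in>space M. pcount (Psi \<omega>) (cball 0 (rho h (Suc k)) - cball 0 (rho h k)) \<in> {1..}}"
    unfolding HH_def by (rule indep3) (auto intro: CC_meas)
  also have "prob {\<omega>\<in>space M. pcount (Phi \<omega>) (cball 0 (rho h (Suc k)) - {0}) \<in> {Suc n..}} = 1 - DD (Suc n) (real (Suc k) * h)"
    using tailPhi[OF CC_meas(3,4)[of h "Suc k"], where N="Suc n"] CC_punct_measure[of h "Suc k"] h by simp
  also have "prob {\<omega>\<in>space M. pcount (Psi \<omega>) (cball 0 (rho h k)) \<in> {0}} = exp (-(lam * (real k * h)))"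
    using zeroPsi[OF CC_meas(1,2)[of h k]] CC_measure[of h k] h by simp
  also have "prob {\<omega>\<in>space M. pcount (Psi \<omega>) (cball 0 (rho h (Suc k)) - cball 0 (rho h k)) \<in> {1..}} = 1 - exp (-(lam * h))"
    using tailPsi[OF CC_meas(5,6)[of h k], where N=1] CC_ann_measure[of h k] h by (simp add: DD_1)
  finally show ?thesis unfolding exp_split by (rule gen)
qed

lemma GG_sub: "GG h n k \<subseteq> TT (Suc n)"
proof
  fix \<omega> assume w: "\<omega> \<in> GG h n k"
  then have sp: "\<omega> \<in> space M" by (simp add: GG_def)
  from w have c1: "Suc n \<le> pcount (Phi \<omega>) (cball 0 (rho h k) - {0})"
    and c2: "pcount (Psi \<omega>) (cball 0 (rho h k)) = 0"
    and c3: "1 \<le> pcount (Psi \<omega>) (cball 0 (rho h (Suc k)) - cball 0 (rho h k))"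
    by (auto simp: GG_def)
  have e: "Psi \<omega> \<inter> cball 0 (rho h k) = {}"
    using c2 pcount_zero_iff[OF lfPsi[OF sp CC_meas(2)]] by blast
  have "Psi \<omega> \<inter> (cball 0 (rho h (Suc k)) - cball 0 (rho h k)) \<noteq> {}"
    using c3 pcount_pos_iff[OF lfPsi[OF sp CC_meas(6)]] by blast
  then obtain p where p: "p \<in> Psi \<omega>" by blast
  have "Suc n \<le> out_degree_origin (Phi \<omega>) (Psi \<omega>)"
    by (rule os_lower[OF e p lfPhi[OF sp bounded_ball]]) (use c1 in \<open>simp add: pcount_def\<close>)
  then show "\<omega> \<in> TT (Suc n)" using sp by (simp add: TT_def)
qed

lemma GG_disj:
  assumes h: "h > 0" shows "disjoint_family (GG h n)"
proof -
  have *: "GG h n k \<inter> GG h n k' = {}" if kk: "k < k'" for k k'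
  proof (rule ccontr)
    assume "GG h n k \<inter> GG h n k' \<noteq> {}"
    then obtain \<omega> where w: "\<omega> \<in> GG h n k" "\<omega> \<in> GG h n k'" by blast
    then have sp: "\<omega> \<in> space M" by (simp add: GG_def)
    from w have c2: "pcount (Psi \<omega>) (cball 0 (rho h k')) = 0"
      and c3: "1 \<le> pcount (Psi \<omega>) (cball 0 (rho h (Suc k)) - cball 0 (rho h k))"
      by (auto simp: GG_def)
    have e: "Psi \<omega> \<inter> cball 0 (rho h k') = {}"
      using c2 pcount_zero_iff[OF lfPsi[OF sp CC_meas(2)]] by blast
    have "Psi \<omega> \<inter> (cball 0 (rho h (Suc k)) - cball 0 (rho h k)) \<noteq> {}"
      using c3 pcount_pos_iff[OF lfPsi[OF sp CC_meas(6)]] by blast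
    moreover have "cball (0::real^2) (rho h (Suc k)) \<subseteq> cball 0 (rho h k')"
      using h kk by (intro CC_mono) auto
    ultimately show False using e by blast
  qed
  show ?thesis unfolding disjoint_family_on_def
  proof (intro ballI impI)
    fix k k' :: nat assume "k \<noteq> k'"
    then show "GG h n k \<inter> GG h n k' = {}"
      using *[of k k'] *[of k' k] by (cases "k < k'") (auto simp: Int_commute)
  qed
qed

lemma TT_sub:
  assumes h: "h > 0" shows "TT (Suc n) \<subseteq> ZZ \<union> (\<Union>k. HH h n k)"
proof
  fix \<omega> assume w: "\<omega> \<in> TT (Suc n)"
  then have sp: "\<omega> \<in> space M" and d: "Suc n \<le> out_degree_origin (Phi \<omega>) (Psi \<omega>)" by (auto simp: TT_def)
  show "\<omega> \<in> ZZ \<union> (\<Union>k. HH h n k)"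
  proof (cases "Psi \<omega> = {}")
    case True then show ?thesis using sp by (simp add: ZZ_def)
  next
    case False
    then obtain p0 where p0: "p0 \<in> Psi \<omega>" by blast
    obtain k1 where "p0 \<in> cball 0 (rho h k1)" using CC_cover[OF h] by blast
    then have ex: "\<exists>k. Psi \<omega> \<inter> cball 0 (rho h k) \<noteq> {}" using p0 by blast
    define k0 where "k0 = (LEAST k. Psi \<omega> \<inter> cball 0 (rho h k) \<noteq> {})"
    have k0: "Psi \<omega> \<inter> cball 0 (rho h k0) \<noteq> {}" unfolding k0_def using ex by (rule LeastI_ex)
    have k0': "Psi \<omega> \<inter> cball 0 (rho h k) = {}" if "k < k0" for k
      using not_less_Least[OF that[unfolded k0_def]] unfolding k0_def by blast
    have "k0 \<noteq> 0"
    proof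
      assume "k0 = 0"
      then have "0 \<in> Psi \<omega>" using k0 by (simp add: CC_0)
      then have "out_degree_origin (Phi \<omega>) (Psi \<omega>) = 0" unfolding out_degree_origin_def os_zero[OF \<open>0 \<in> Psi \<omega>\<close>] by simp
      then show False using d by simp
    qed
    then obtain k where kk: "k0 = Suc k" using not0_implies_Suc by blast
    have e: "Psi \<omega> \<inter> cball 0 (rho h k) = {}" using k0'[of k] kk by simp
    obtain p where p: "p \<in> Psi \<omega>" "p \<in> cball 0 (rho h (Suc k))" using k0 kk by blast
    have "out_degree_origin (Phi \<omega>) (Psi \<omega>) \<le> card (Phi \<omega> \<inter> (cball 0 (rho h (Suc k)) - {0}))"
      by (rule os_upper[OF p(1) _ lfPhi[OF sp CC_meas(4)]]) (use p(2) in \<open>simp add: dist_norm\<close>)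
    then have c1: "Suc n \<le> pcount (Phi \<omega>) (cball 0 (rho h (Suc k)) - {0})"
      using d by (simp add: pcount_def)
    have c2: "pcount (Psi \<omega>) (cball 0 (rho h k)) = 0" using e by (simp add: pcount_def)
    have "Psi \<omega> \<inter> (cball 0 (rho h (Suc k)) - cball 0 (rho h k)) \<noteq> {}" using p e by blast
    then have c3: "1 \<le> pcount (Psi \<omega>) (cball 0 (rho h (Suc k)) - cball 0 (rho h k))"
      using pcount_pos_iff[OF lfPsi[OF sp CC_meas(6)]] by blast
    have "\<omega> \<in> HH h n k" using sp c1 c2 c3 by (simp add: HH_def)
    then show ?thesis by blast
  qed
qed


lemma TT_prob: "prob (TT (Suc n)) = (1/(1+lam))^(Suc n)"
proof -
  have bnd: "\<bar>prob (TT (Suc n)) - (1/(1+lam))^(Suc n)\<bar> \<le> h" if h: "h > 0" for h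
  proof -
    define w where "w \<equiv> (\<lambda>k::nat. exp (-(lam * (real k * h))) - exp (-(lam * (real (Suc k) * h))))"
    define g where "g \<equiv> (\<lambda>k::nat. 1 - DD (Suc n) (real k * h))"
    have SB: "summable (\<lambda>k. w k * g k)" "summable (\<lambda>k. w k * g (Suc k))"
      "(\<Sum>k. w k * g k) \<le> (1/(1+lam))^(Suc n)"
      "(1/(1+lam))^(Suc n) \<le> (\<Sum>k. w k * g (Suc k))"
      "(\<Sum>k. w k * g (Suc k)) \<le> (\<Sum>k. w k * g k) + h"
      using sum_bounds[OF lam h, of n] unfolding w_def g_def by auto
    have pG: "prob (GG h n k) = w k * g k" for k using prob_GG[OF h] unfolding w_def g_def by simp
    have pH: "prob (HH h n k) = w k * g (Suc k)" for k using prob_HH[OF h] unfolding w_def g_def by simp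
    have "(\<lambda>k. prob (GG h n k)) sums prob (\<Union>k. GG h n k)"
      by (rule finite_measure_UNION) (auto simp: GG_ev GG_disj[OF h])
    then have "(\<Sum>k. w k * g k) = prob (\<Union>k. GG h n k)" using pG by (simp add: sums_iff)
    also have "\<dots> \<le> prob (TT (Suc n))"
      by (rule finite_measure_mono) (use GG_sub TT_ev in auto)
    finally have low: "(\<Sum>k. w k * g k) \<le> prob (TT (Suc n))" .
    have "prob (TT (Suc n)) \<le> prob (ZZ \<union> (\<Union>k. HH h n k))"
      by (rule finite_measure_mono[OF TT_sub[OF h]]) (auto intro!: sets.Un ZZ_ev HH_ev)
    also have "\<dots> \<le> prob ZZ + prob (\<Union>k. HH h n k)"
      by (rule measure_subadditive) (auto intro!: ZZ_ev HH_ev simp: emeasure_finite)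
    also have "prob (\<Union>k. HH h n k) \<le> (\<Sum>k. prob (HH h n k))"
      by (rule finite_measure_subadditive_countably) (auto simp: HH_ev pH SB(2))
    finally have up: "prob (TT (Suc n)) \<le> (\<Sum>k. w k * g (Suc k))" by (simp add: ZZ_null pH)
    show ?thesis using low up SB by linarith
  qed
  have "\<bar>prob (TT (Suc n)) - (1/(1+lam))^(Suc n)\<bar> \<le> 0"
    by (rule field_le_epsilon) (use bnd in simp)
  then show ?thesis by simp
qed

end

theorem proposition1:
  fixes M :: "'w measure" and Phi Psi :: "'w \<Rightarrow> (real^2) set" and lambda :: real
  assumes "lambda > 0"
    and "indep_poisson_pps M Phi 1 Psi lambda"
  shows "\<forall>n::nat. measure M {\<omega>\<in>space M. out_degree_origin (Phi \<omega>) (Psi \<omega>) = n}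
           = lambda / (1 + lambda) * (1 / (1 + lambda)) ^ n"
proof
  fix n :: nat
  interpret ppp M Phi Psi lambda using assms by unfold_locales
  have TT0: "TT 0 = space M" by (auto simp: TT_def)
  have ev: "TT m \<in> events" for m by (cases m) (auto simp: TT0 TT_ev)
  have pr: "prob (TT m) = (1 / (1 + lambda)) ^ m" for m
    by (cases m) (auto simp: TT0 TT_prob prob_space)
  have S: "{\<omega>\<in>space M. out_degree_origin (Phi \<omega>) (Psi \<omega>) = n} = TT n - TT (Suc n)"
    by (auto simp: TT_def)
  have D: "prob (TT n - TT (Suc n)) = prob (TT n) - prob (TT (Suc n))"
    by (rule finite_measure_Diff[OF ev ev]) (auto simp: TT_def)
  have "measure M {\<omega>\<in>space M. out_degree_origin (Phi \<omega>) (Psi \<omega>) = n} = prob (TT n) - prob (TT (Suc n))"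
    unfolding S D ..
  also have "\<dots> = (1 / (1 + lambda)) ^ n - (1 / (1 + lambda)) ^ Suc n" by (simp add: pr)
  also have "\<dots> = (1 / (1 + lambda)) ^ n * (1 - 1 / (1 + lambda))"
    by (simp add: algebra_simps)
  also have "1 - 1 / (1 + lambda) = lambda / (1 + lambda)"
    using assms(1) by (simp add: field_simps)
  also have "(1 / (1 + lambda)) ^ n * (lambda / (1 + lambda)) = lambda / (1 + lambda) * (1 / (1 + lambda)) ^ n"
    by simp
  finally show "measure M {\<omega>\<in>space M. out_degree_origin (Phi \<omega>) (Psi \<omega>) = n}
           = lambda / (1 + lambda) * (1 / (1 + lambda)) ^ n" .
qed


end
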